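(* Let $z\in\mathbb{E}^d$ and $x\in\mathbb{E}^d\setminus\mathbf{B}[z]$. Let $C$ be a circle of radius at least one and $\mu$ an arc of $C$ which is shorter than a quarter circle, with end points $x$ and $y$, oriented from $x$ toward $y$. Assume that the angle between the vector $x-z$ and the (oriented) tangent direction of $\mu$ at $x$ is at most a right angle. Then $y\notin\mathbf{B}[z]$.
   Context: $\mathbf{B}[z]$ denotes the closed unit ball centered at $z$. An arc is a connected subset of a circle containing no pair of antipodal points of the circle. *)

theory Defs
  imports "HOL-Analysis.Analysis"
begin

text \<open>Point of the circle with centre c, radius r, spanned by the orthonormal
pair u, v, at angle t.  The circle is { circ_pt c r u v t | t }.\<close>
definition circ_pt :: "'a::euclidean_space \<Rightarrow> real \<Rightarrow> 'a \<Rightarrow> 'a \<Rightarrow> real \<Rightarrow> 'a" where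
  "circ_pt c r u v t = c + r *\<^sub>R (cos t *\<^sub>R u + sin t *\<^sub>R v)"

end

theory Submission
  imports Defs
begin

lemma circ_deriv0: "vector_derivative (circ_pt c r u v) (at 0) = r *\<^sub>R v"
proof -
  have "(circ_pt c r u v has_vector_derivative r *\<^sub>R v) (at 0)"
    unfolding circ_pt_def[abs_def]
    by (auto intro!: derivative_eq_intros)
  then show ?thesis by (rule vector_derivative_at)
qed

lemma scalar_ineq:
  fixes a pp qq r sn cs :: real
  assumes a1: "a > 1" and pa: "pp \<le> a" and qq: "qq \<ge> 0" and r: "r \<ge> 1"
    and sn: "sn \<ge> 0" and co0: "cs \<ge> 0" and co1: "cs \<le> 1" and sc: "sn\<^sup>2 + cs\<^sup>2 = 1"
  shows "a\<^sup>2 + 2*r*(cs-1)*pp + 2*r* sn*qq + 2*r\<^sup>2*(1-cs) > 1"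
proof -
  define k where "k = 1 - cs"
  have k0: "k \<ge> 0" and k1: "k \<le> 1" using co0 co1 by (auto simp: k_def)
  have "2*r* sn*qq \<ge> 0" using r sn qq by simp
  moreover have "2*r*(cs-1)*pp \<ge> -2*r*k*a"
  proof -
    have "r*k*pp \<le> r*k*a" using pa r k0 by (intro mult_left_mono) auto
    then show ?thesis by (simp add: k_def algebra_simps)
  qed
  moreover have "a\<^sup>2 - 2*r*k*a + 2*r\<^sup>2*k > 1"
  proof (cases "r*k \<le> 1")
    case True
    have "a\<^sup>2 - 2*r*k*a + 2*r\<^sup>2*k - 1 = (a-1)*(a+1-2*r*k) + 2*r*k*(r-1)"
      by (simp add: algebra_simps power2_eq_square)
    moreover have "(a-1)*(a+1-2*r*k) > 0" using True a1 by (intro mult_pos_pos) auto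
    moreover have "2*r*k*(r-1) \<ge> 0" using r k0 by simp
    ultimately show ?thesis by linarith
  next
    case False
    have "sn \<ge> k"
    proof -
      have "sn\<^sup>2 \<le> 1\<^sup>2" using sc by (simp add: add_nonneg_eq_0_iff) (smt (verit) zero_le_power2)
      then have "sn \<le> 1" by (rule power2_le_imp_le) simp
      then have "sn\<^sup>2 \<le> sn" using sn by (simp add: power2_eq_square mult_left_le_one_le)
      moreover have "cs\<^sup>2 \<le> cs" using co0 co1 by (simp add: power2_eq_square mult_left_le_one_le)
      ultimately show ?thesis using sc by (simp add: k_def)
    qed
    then have rs: "r* sn > 1" using False r by (smt (verit) mult_left_mono)
    have "a\<^sup>2 - 2*r*k*a + 2*r\<^sup>2*k = (a - r*k)\<^sup>2 + r\<^sup>2*(1 - cs\<^sup>2)"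
      by (simp add: k_def algebra_simps power2_eq_square)
    also have "1 - cs\<^sup>2 = sn\<^sup>2" using sc by simp
    also have "r\<^sup>2* sn\<^sup>2 = (r* sn)\<^sup>2" by (simp add: power_mult_distrib)
    finally show ?thesis using rs
      by (smt (verit) one_less_power zero_le_power2 pos2)
  qed
  moreover have "2*r\<^sup>2*(1-cs) = 2*r\<^sup>2*k" by (simp add: k_def)
  ultimately show ?thesis by linarith
qed

lemma expand3:
  fixes w u v :: "'a::real_inner"
  assumes "u \<bullet> u = 1" "v \<bullet> v = 1" "u \<bullet> v = 0"
  shows "(w + A *\<^sub>R u + B *\<^sub>R v) \<bullet> (w + A *\<^sub>R u + B *\<^sub>R v)
    = (norm w)\<^sup>2 + 2*A*(w\<bullet>u) + 2*B*(w\<bullet>v) + A\<^sup>2 + B\<^sup>2"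
proof -
  have vu: "v \<bullet> u = 0" using assms(3) by (simp add: inner_commute)
  have "w \<bullet> w = (norm w)\<^sup>2" by (simp add: dot_square_norm)
  then show ?thesis using assms vu
    by (simp add: inner_add_left inner_add_right inner_commute[of u w] inner_commute[of v w]
        power2_eq_square algebra_simps)
qed

theorem lemma1:
  fixes z x y c u v :: "'a::euclidean_space" and r \<theta> :: real
  assumes "x \<notin> cball z 1"
    and "norm u = 1" and "norm v = 1" and "u \<bullet> v = 0"
    and "r \<ge> 1"
    and "0 \<le> \<theta>" and "\<theta> < pi / 2"
    and "x = circ_pt c r u v 0" and "y = circ_pt c r u v \<theta>"
    and "(x - z) \<bullet> vector_derivative (circ_pt c r u v) (at 0) \<ge> 0"
  shows "y \<notin> cball z 1"
proof -
  define w where "w = x - z"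
  have a1: "norm w > 1" using assms(1) by (simp add: w_def dist_norm norm_minus_commute)
  have q: "w \<bullet> v \<ge> 0" using assms(10) assms(5) by (simp add: circ_deriv0 w_def zero_le_mult_iff)
  have pa: "w \<bullet> u \<le> norm w" using Cauchy_Schwarz_ineq2[of w u] assms(2) by simp
  have s: "sin \<theta> \<ge> 0" using assms(6,7) by (intro sin_ge_zero) auto
  have co: "cos \<theta> \<ge> 0" using assms(6,7) by (intro cos_ge_zero) auto
  have yz: "y - z = w + (r*(cos \<theta> - 1)) *\<^sub>R u + (r * sin \<theta>) *\<^sub>R v"
    using assms(8,9) by (simp add: w_def circ_pt_def algebra_simps)
  have uu: "u \<bullet> u = 1" and vv: "v \<bullet> v = 1" using assms(2,3) by (simp_all add: dot_square_norm)
  have "(norm (y - z))\<^sup>2 = (y-z) \<bullet> (y-z)" by (simp add: dot_square_norm)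
  also have "\<dots> = (norm w)\<^sup>2 + 2*r*(cos \<theta>-1)*(w\<bullet>u) + 2*r* sin \<theta>*(w\<bullet>v)
      + (r*(cos \<theta> - 1))\<^sup>2 + (r* sin \<theta>)\<^sup>2"
    unfolding yz using expand3[OF uu vv assms(4), of w "r*(cos \<theta> - 1)" "r * sin \<theta>"]
    by (simp add: mult.assoc)
  finally have E1: "(norm (y - z))\<^sup>2 = (norm w)\<^sup>2 + 2*r*(cos \<theta>-1)*(w\<bullet>u) + 2*r* sin \<theta>*(w\<bullet>v)
      + ((r*(cos \<theta> - 1))\<^sup>2 + (r* sin \<theta>)\<^sup>2)" by simp
  have E2: "(r*(cos \<theta> - 1))\<^sup>2 + (r* sin \<theta>)\<^sup>2 = 2*r\<^sup>2*(1 - cos \<theta>)"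
  proof -
    have h: "(sin \<theta>)\<^sup>2 = 1 - (cos \<theta>)\<^sup>2" by (simp add: sin_squared_eq)
    show ?thesis by (simp add: power_mult_distrib h) (simp add: algebra_simps power2_eq_square)
  qed
  have "(norm (y - z))\<^sup>2 > 1"
    using scalar_ineq[OF a1 pa q assms(5) s co cos_le_one sin_cos_squared_add[of \<theta>]] E1 E2
    by linarith
  then have "norm (y - z) > 1"
    by (smt (verit) norm_ge_zero power_le_one)
  then show ?thesis by (simp add: dist_norm norm_minus_commute)
qed

end
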